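(* Let $\mathcal C$ be the UM simplex $(n,k)$ code. Then for every $s\ge 0$ the binary block code generated by $G_{\rm total}$ has minimum distance $3\cdot2^{k-1}$. Moreover, the column distances and free distance of $\mathcal C$ satisfy $d_0=2^k$ and $d_{free}=d_j=3\cdot2^{k-1}$ for all $j\ge1$.
   Context: Let $k\ge2$ and let $G\in\mathbb F_2^{k\times(2^k-1)}$ be a generator matrix of the binary simplex code (columns are all distinct nonzero vectors of $\mathbb F_2^k$); set $n=2(2^k-1)$. The UM simplex $(n,k)$ code $\mathcal C$ is the binary convolutional code $\{u(D)G(D): u(D)\in\mathbb F_2^k[D]\}\subseteq\mathbb F_2^n[D]$ with encoder $G(D)=G_0+G_1D$, $G_0=[G\ G]$, $G_1=[G\ 0]\in\mathbb F_2^{k\times n}$. For $u(D)=\sum_{i=0}^s u_iD^i$, the codeword $c(D)=\sum_{i=0}^{s+1}c_iD^i$ satisfies $(c_0,\dots,c_{s+1})=(u_0,\dots,u_s)G_{\rm total}$, where $G_{\rm total}\in\mathbb F_2^{(s+1)k\times(s+2)n}$ is the block matrix whose $i$-th block row ($i=0,\dots,s$) has $G_0$ in block column $i$, $G_1$ in block column $i+1$ and zeros elsewhere (block columns of width $n$). The free distance is $d_{free}=\min\{wt(c(D)): 0\ne c(D)\in\mathcal C\}$ with $wt(c(D))=\sum_i wt(c_i)$ (Hamming weight). The $j$-th column distance is $d_j=\min\{wt(c_0+c_1D+\dots+c_jD^j): \sum_i c_iD^i\in\mathcal C,\ c_0\ne0\}$. *)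

theory Defs
  imports "HOL-Library.Z2" "HOL-Computational_Algebra.Polynomial"
begin

text \<open>A vector of length N is a function nat => bit, only indices < N are relevant.
  A matrix is a function row => column => bit.\<close>

type_synonym f2vec = "nat \<Rightarrow> bit"
type_synonym f2mat = "nat \<Rightarrow> nat \<Rightarrow> bit"

definition col :: "nat \<Rightarrow> f2mat \<Rightarrow> nat \<Rightarrow> f2vec" where
  "col k M j = (\<lambda>i. if i < k then M i j else 0)"

definition is_simplex_gen :: "nat \<Rightarrow> f2mat \<Rightarrow> bool" where
  "is_simplex_gen k G \<longleftrightarrow>
     bij_betw (col k G) {..<2^k - 1} {v. (\<forall>i\<ge>k. v i = 0) \<and> v \<noteq> (\<lambda>_. 0)}"

definition simplex_len :: "nat \<Rightarrow> nat" where
  "simplex_len k = 2^k - 1"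

definition um_n :: "nat \<Rightarrow> nat" where
  "um_n k = 2 * simplex_len k"

definition um_G0 :: "nat \<Rightarrow> f2mat \<Rightarrow> f2mat" where
  "um_G0 k G i j =
     (if i < k \<and> j < simplex_len k then G i j
      else if i < k \<and> simplex_len k \<le> j \<and> j < 2 * simplex_len k then G i (j - simplex_len k)
      else 0)"

definition um_G1 :: "nat \<Rightarrow> f2mat \<Rightarrow> f2mat" where
  "um_G1 k G i j = (if i < k \<and> j < simplex_len k then G i j else 0)"

text \<open>G_total in F_2^{(s+1)k x (s+2)n}: block row bi has G_0 in block column bi
  and G_1 in block column bi+1.\<close>
definition um_Gtotal :: "nat \<Rightarrow> f2mat \<Rightarrow> nat \<Rightarrow> f2mat" where
  "um_Gtotal k G s r c =
     (if r < (s + 1) * k \<and> c < (s + 2) * um_n k then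
        (if c div um_n k = r div k then um_G0 k G (r mod k) (c mod um_n k)
         else if c div um_n k = r div k + 1 then um_G1 k G (r mod k) (c mod um_n k)
         else 0)
      else 0)"

definition vecmat :: "nat \<Rightarrow> f2vec \<Rightarrow> f2mat \<Rightarrow> f2vec" where
  "vecmat K u M = (\<lambda>j. \<Sum>i<K. u i * M i j)"

definition hamming_dist :: "nat \<Rightarrow> f2vec \<Rightarrow> f2vec \<Rightarrow> nat" where
  "hamming_dist N x y = card {j. j < N \<and> x j \<noteq> y j}"

definition block_code :: "nat \<Rightarrow> nat \<Rightarrow> f2mat \<Rightarrow> f2vec set" where
  "block_code K N M = {(\<lambda>j. if j < N then vecmat K u M j else 0) | u. True}"

definition min_dist :: "nat \<Rightarrow> f2vec set \<Rightarrow> nat" where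
  "min_dist N C = Inf {hamming_dist N x y | x y. x \<in> C \<and> y \<in> C \<and> x \<noteq> y}"

definition um_GD :: "nat \<Rightarrow> f2mat \<Rightarrow> nat \<Rightarrow> nat \<Rightarrow> bit poly" where
  "um_GD k G i j = [: um_G0 k G i j, um_G1 k G i j :]"

definition um_code :: "nat \<Rightarrow> f2mat \<Rightarrow> (nat \<Rightarrow> bit poly) set" where
  "um_code k G = {c. \<exists>u :: nat \<Rightarrow> bit poly.
      c = (\<lambda>j. if j < um_n k then (\<Sum>i<k. u i * um_GD k G i j) else 0)}"

definition poly_wt :: "nat \<Rightarrow> (nat \<Rightarrow> bit poly) \<Rightarrow> nat" where
  "poly_wt N c = (\<Sum>j<N. card {t. coeff (c j) t \<noteq> 0})"

definition trunc_wt :: "nat \<Rightarrow> nat \<Rightarrow> (nat \<Rightarrow> bit poly) \<Rightarrow> nat" where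
  "trunc_wt N J c = (\<Sum>j<N. card {t. t \<le> J \<and> coeff (c j) t \<noteq> 0})"

definition free_distance :: "nat \<Rightarrow> f2mat \<Rightarrow> nat" where
  "free_distance k G = Inf {poly_wt (um_n k) c | c. c \<in> um_code k G \<and> (\<exists>j<um_n k. c j \<noteq> 0)}"

definition column_distance :: "nat \<Rightarrow> f2mat \<Rightarrow> nat \<Rightarrow> nat" where
  "column_distance k G J = Inf {trunc_wt (um_n k) J c | c. c \<in> um_code k G \<and> (\<exists>j<um_n k. coeff (c j) 0 \<noteq> 0)}"

end

theory Submission
  imports Defs
begin


definition Wk :: "nat \<Rightarrow> f2vec set" where "Wk k = {v. \<forall>i\<ge>k. v i = 0}"

lemma card_Wk: "card (Wk k) = 2^k"
proof -
  have "bij_betw (\<lambda>v. {i. v i = 1}) (Wk k) (Pow {..<k})"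
  proof (rule bij_betw_byWitness[where f' = "\<lambda>S i. if i \<in> S then 1 else 0"])
    show "\<forall>a\<in>Wk k. (\<lambda>S i. if i \<in> S then 1 else 0) {i. a i = 1} = a"
      by (auto simp: Wk_def fun_eq_iff)
    show "\<forall>a'\<in>Pow {..<k}. {i. (if i \<in> a' then 1 else 0) = (1::bit)} = a'"
      by auto
    show "(\<lambda>v. {i. v i = 1}) ` Wk k \<subseteq> Pow {..<k}"
      by (auto simp: Wk_def) (metis leI zero_neq_one)
    show "(\<lambda>S i. if i \<in> S then 1 else 0) ` Pow {..<k} \<subseteq> Wk k"
      by (auto simp: Wk_def)
  qed
  then have "card (Wk k) = card (Pow {..<k})" by (rule bij_betw_same_card)
  then show ?thesis by (simp add: card_Pow)
qed

lemma finite_Wk: "finite (Wk k)"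
  using card_Wk[of k] card.infinite by fastforce

definition dot :: "nat \<Rightarrow> f2vec \<Rightarrow> f2vec \<Rightarrow> bit" where
  "dot k a v = (\<Sum>i<k. a i * v i)"

lemma dot_flip:
  assumes "i0 < k"
  shows "dot k a (v(i0 := v i0 + 1)) = dot k a v + a i0"
proof -
  have "dot k a (v(i0 := v i0 + 1)) = a i0 * (v i0 + 1) + (\<Sum>i\<in>{..<k}-{i0}. a i * v i)"
    unfolding dot_def using assms
    by (subst sum.remove[of _ i0]) (auto intro!: sum.cong)
  also have "dot k a v = a i0 * v i0 + (\<Sum>i\<in>{..<k}-{i0}. a i * v i)"
    unfolding dot_def using assms by (subst sum.remove[of _ i0]) auto
  ultimately show ?thesis by (simp only: distrib_left mult_1_right add_ac)
qed

lemma count_dot: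
  assumes "i0 < k" "a i0 = 1"
  shows "card {v\<in>Wk k. dot k a v = 1} = 2^(k-1)"
proof -
  define f where "f = (\<lambda>v::f2vec. v(i0 := v i0 + 1))"
  have ff: "f (f v) = v" for v
    by (auto simp: f_def fun_eq_iff simp del: add_bit_eq_xor)
  have fW: "v \<in> Wk k \<Longrightarrow> f v \<in> Wk k" for v using assms(1) by (auto simp: f_def Wk_def)
  have fd: "dot k a (f v) = dot k a v + 1" for v using dot_flip[OF assms(1)] assms(2) by (simp add: f_def)
  have b: "bij_betw f {v\<in>Wk k. dot k a v = 0} {v\<in>Wk k. dot k a v = 1}"
  proof (rule bij_betw_byWitness[where f' = f])
    show "\<forall>a\<in>{v \<in> Wk k. dot k a v = 0}. f (f a) = a" using ff by auto
    show "\<forall>a'\<in>{v \<in> Wk k. dot k a v = 1}. f (f a') = a'" using ff by auto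
    show "f ` {v \<in> Wk k. dot k a v = 0} \<subseteq> {v \<in> Wk k. dot k a v = 1}" using fW fd by auto
    show "f ` {v \<in> Wk k. dot k a v = 1} \<subseteq> {v \<in> Wk k. dot k a v = 0}" using fW fd by auto
  qed
  have c: "card {v\<in>Wk k. dot k a v = 0} = card {v\<in>Wk k. dot k a v = 1}"
    using bij_betw_same_card[OF b] .
  define A0 where "A0 = {v\<in>Wk k. dot k a v = 0}"
  define A1 where "A1 = {v\<in>Wk k. dot k a v = 1}"
  have U: "Wk k = A0 \<union> A1" unfolding A0_def A1_def by auto
  have "finite A0" "finite A1" unfolding A0_def A1_def using finite_Wk[of k] by auto
  moreover have "A0 \<inter> A1 = {}" unfolding A0_def A1_def by auto
  ultimately have "card (A0 \<union> A1) = card A0 + card A1" by (rule card_Un_disjoint)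
  then have "card (Wk k) = card {v\<in>Wk k. dot k a v = 0} + card {v\<in>Wk k. dot k a v = 1}"
    unfolding U[symmetric] unfolding A0_def A1_def .
  then have "2^k = 2 * card {v\<in>Wk k. dot k a v = 1}" using c card_Wk[of k] by simp
  moreover have "(2::nat)^k = 2 * 2^(k-1)" using assms(1) power_Suc[of "2::nat" "k-1"] by simp
  ultimately show ?thesis by simp
qed



definition ip :: "nat \<Rightarrow> f2mat \<Rightarrow> f2vec \<Rightarrow> nat \<Rightarrow> bit" where
  "ip k G a j = (\<Sum>i<k. a i * G i j)"

definition nzv :: "nat \<Rightarrow> f2vec \<Rightarrow> bool" where
  "nzv k a \<longleftrightarrow> (\<exists>i<k. a i = 1)"

lemma ip_zero: "\<not> nzv k a \<Longrightarrow> ip k G a j = 0"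
  unfolding nzv_def ip_def by (auto intro!: sum.neutral)

lemma ip_add: "ip k G a j + ip k G b j = ip k G (\<lambda>i. a i + b i) j"
  unfolding ip_def by (simp only: sum.distrib[symmetric] distrib_right)

lemma dot_zero: "dot k a (\<lambda>_. 0) = 0" by (simp add: dot_def)

lemma wt_ip:
  assumes G: "is_simplex_gen k G" and nz: "nzv k a"
  shows "card {j. j < simplex_len k \<and> ip k G a j = 1} = 2^(k-1)"
proof -
  obtain i0 where i0: "i0 < k" "a i0 = 1" using nz unfolding nzv_def by auto
  define V where "V = {v::f2vec. (\<forall>i\<ge>k. v i = 0) \<and> v \<noteq> (\<lambda>_. 0)}"
  have bij: "bij_betw (col k G) {..<simplex_len k} V"
    using G unfolding is_simplex_gen_def simplex_len_def V_def by simp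
  have ipd: "ip k G a j = dot k a (col k G j)" for j
    unfolding ip_def dot_def col_def by (auto intro!: sum.cong)
  have sub: "{j. j < simplex_len k \<and> ip k G a j = 1} \<subseteq> {..<simplex_len k}" by auto
  have img: "col k G ` {j. j < simplex_len k \<and> ip k G a j = 1} = {v\<in>V. dot k a v = 1}"
  proof -
    have "col k G ` {j. j < simplex_len k \<and> ip k G a j = 1}
        = {v \<in> col k G ` {..<simplex_len k}. dot k a v = 1}"
      using ipd by auto
    also have "col k G ` {..<simplex_len k} = V" using bij by (simp add: bij_betw_def)
    finally show ?thesis .
  qed
  have "bij_betw (col k G) {j. j < simplex_len k \<and> ip k G a j = 1} {v\<in>V. dot k a v = 1}"
    using bij_betw_subset[OF bij sub img] .
  then have "card {j. j < simplex_len k \<and> ip k G a j = 1} = card {v\<in>V. dot k a v = 1}"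
    by (rule bij_betw_same_card)
  also have "{v\<in>V. dot k a v = 1} = {v\<in>Wk k. dot k a v = 1}"
    unfolding V_def Wk_def using dot_zero[of k a] by auto
  also have "card \<dots> = 2^(k-1)" using count_dot[of i0 k a] i0 by simp
  finally show ?thesis .
qed

lemma block_card:
  fixes T n :: nat and P :: "nat \<Rightarrow> nat \<Rightarrow> bool"
  shows "card {c. c < T * n \<and> P (c div n) (c mod n)} = (\<Sum>t<T. card {m. m < n \<and> P t m})"
proof (induction T)
  case 0
  then show ?case by simp
next
  case (Suc T)
  show ?case
  proof (cases "n = 0")
    case True
    then show ?thesis by simp
  next
    case False
    have eq: "{c. c < Suc T * n \<and> P (c div n) (c mod n)}
      = {c. c < T * n \<and> P (c div n) (c mod n)} \<union> (\<lambda>m. T * n + m) ` {m. m < n \<and> P T m}"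
    proof (rule set_eqI, rule iffI)
      fix c assume c: "c \<in> {c. c < Suc T * n \<and> P (c div n) (c mod n)}"
      show "c \<in> {c. c < T * n \<and> P (c div n) (c mod n)} \<union> (\<lambda>m. T * n + m) ` {m. m < n \<and> P T m}"
      proof (cases "c < T * n")
        case True then show ?thesis using c by auto
      next
        case f: False
        then have "c div n = T" using c
          by (intro div_nat_eqI) (simp_all add: mult.commute)
        moreover have "c = T * n + c mod n"
          by (metis calculation div_mult_mod_eq mult.commute)
        ultimately show ?thesis using c False by (auto intro!: image_eqI[where x = "c mod n"])
      qed
    next
      fix c assume c: "c \<in> {c. c < T * n \<and> P (c div n) (c mod n)} \<union> (\<lambda>m. T * n + m) ` {m. m < n \<and> P T m}"
      then show "c \<in> {c. c < Suc T * n \<and> P (c div n) (c mod n)}"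
        using False by auto
    qed
    have disj: "{c. c < T * n \<and> P (c div n) (c mod n)} \<inter> (\<lambda>m. T * n + m) ` {m. m < n \<and> P T m} = {}"
      by auto
    have "card {c. c < Suc T * n \<and> P (c div n) (c mod n)}
      = card {c. c < T * n \<and> P (c div n) (c mod n)} + card ((\<lambda>m. T * n + m) ` {m. m < n \<and> P T m})"
      unfolding eq by (rule card_Un_disjoint) (use disj in auto)
    also have "card ((\<lambda>m. T * n + m) ` {m. m < n \<and> P T m}) = card {m. m < n \<and> P T m}"
      by (rule card_image) (simp add: inj_on_def)
    finally show ?thesis using Suc.IH by simp
  qed
qed

lemma swap_card:
  assumes "finite A" "finite B"
  shows "(\<Sum>a\<in>A. card {b\<in>B. P a b}) = (\<Sum>b\<in>B. card {a\<in>A. P a b})"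
proof -
  have "(\<Sum>a\<in>A. card {b\<in>B. P a b}) = (\<Sum>a\<in>A. \<Sum>b\<in>B. if P a b then 1 else 0)"
    using assms by (simp add: sum.inter_filter[symmetric])
  also have "\<dots> = (\<Sum>b\<in>B. \<Sum>a\<in>A. if P a b then 1 else 0)" by (rule sum.swap)
  also have "\<dots> = (\<Sum>b\<in>B. card {a\<in>A. P a b})"
    using assms by (simp add: sum.inter_filter[symmetric])
  finally show ?thesis .
qed



definition cw :: "nat \<Rightarrow> f2mat \<Rightarrow> (nat \<Rightarrow> f2vec) \<Rightarrow> nat \<Rightarrow> nat \<Rightarrow> bit" where
  "cw k G U t m = ip k G (U t) (m mod simplex_len k)
     + (if t = 0 then 0 else if m < simplex_len k then ip k G (U (t-1)) m else 0)"

definition bw :: "nat \<Rightarrow> f2mat \<Rightarrow> (nat \<Rightarrow> f2vec) \<Rightarrow> nat \<Rightarrow> nat" where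
  "bw k G U t = card {m. m < um_n k \<and> cw k G U t m = 1}"

lemma L_pos: "k \<ge> 1 \<Longrightarrow> simplex_len k > 0"
  using one_less_power[of "2::nat" k] by (simp add: simplex_len_def)

lemma pow_split: "k \<ge> 1 \<Longrightarrow> (2::nat)^k = 2 * 2^(k-1)"
  using power_Suc[of "2::nat" "k-1"] by simp

lemma bw_split:
  assumes "k \<ge> 1"
  shows "bw k G U t = card {m. m < simplex_len k \<and>
            ip k G (U t) m + (if t = 0 then 0 else ip k G (U (t-1)) m) = 1}
          + card {m. m < simplex_len k \<and> ip k G (U t) m = 1}"
proof -
  define L where "L = simplex_len k"
  have L: "L > 0" using L_pos[OF assms] by (simp add: L_def)
  define P where "P = (\<lambda>q m. cw k G U t (q * L + m) = 1)"
  have "bw k G U t = card {c. c < 2 * L \<and> P (c div L) (c mod L)}"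
    unfolding bw_def P_def um_n_def L_def by simp
  also have "\<dots> = (\<Sum>q<2. card {m. m < L \<and> P q m})" by (rule block_card)
  also have "\<dots> = card {m. m < L \<and> P 0 m} + card {m. m < L \<and> P 1 m}"
    by (simp add: numeral_2_eq_2)
  also have "{m. m < L \<and> P 0 m} = {m. m < L \<and>
            ip k G (U t) m + (if t = 0 then 0 else ip k G (U (t-1)) m) = 1}"
    unfolding P_def cw_def L_def by auto
  also have "{m. m < L \<and> P 1 m} = {m. m < L \<and> ip k G (U t) m = 1}"
    unfolding P_def cw_def using L by (auto simp: L_def)
  finally show ?thesis by (simp add: L_def)
qed

lemma cw_zero:
  assumes "\<not> nzv k (U t)" "t = 0 \<or> \<not> nzv k (U (t-1))"
  shows "cw k G U t m = 0"
  using assms unfolding cw_def by (auto simp: ip_zero)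

lemma bw_B0:
  assumes G: "is_simplex_gen k G" and k: "k \<ge> 1"
    and nz: "nzv k (U t)" and pz: "t = 0 \<or> \<not> nzv k (U (t-1))"
  shows "bw k G U t = 2^k"
proof -
  have "(if t = 0 then 0 else ip k G (U (t-1)) m) = 0" for m
    using pz ip_zero by auto
  then have "bw k G U t = 2 * card {m. m < simplex_len k \<and> ip k G (U t) m = 1}"
    using bw_split[OF k, of G U t] by simp
  then show ?thesis using wt_ip[OF G nz] pow_split[OF k] by simp
qed

lemma bw_B1:
  assumes G: "is_simplex_gen k G" and k: "k \<ge> 1" and t: "t \<ge> 1"
    and z: "\<not> nzv k (U t)" and nz: "nzv k (U (t-1))"
  shows "bw k G U t = 2^(k-1)"
proof -
  have "bw k G U t = card {m. m < simplex_len k \<and> ip k G (U (t-1)) m = 1}"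
    using bw_split[OF k, of G U t] t ip_zero[OF z] by simp
  then show ?thesis using wt_ip[OF G nz] by simp
qed

lemma bw_B2:
  assumes G: "is_simplex_gen k G" and k: "k \<ge> 1" and nz: "nzv k (U t)"
  shows "bw k G U t \<ge> 2^(k-1)"
  using bw_split[OF k, of G U t] wt_ip[OF G nz] by simp

lemma bw_B3:
  assumes "\<not> nzv k (U t)" "t = 0 \<or> \<not> nzv k (U (t-1))"
  shows "bw k G U t = 0"
  unfolding bw_def using cw_zero[OF assms] by simp

lemma seq_lb:
  assumes G: "is_simplex_gen k G" and k: "k \<ge> 1"
    and ne: "{t. nzv k (U t)} \<noteq> {}" and sub: "{t. nzv k (U t)} \<subseteq> {..<T}"
  shows "3 * 2^(k-1) \<le> (\<Sum>t<Suc T. bw k G U t)"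
proof -
  define Z where "Z = {t. nzv k (U t)}"
  have fin: "finite Z" using sub finite_subset unfolding Z_def by blast
  define a where "a = Min Z"
  define b where "b = Max Z"
  have aZ: "a \<in> Z" unfolding a_def using Min_in[OF fin] ne Z_def by auto
  have bZ: "b \<in> Z" unfolding b_def using Max_in[OF fin] ne Z_def by auto
  have ab: "a \<le> b" using fin aZ unfolding b_def by auto
  have bT: "b < T" using bZ sub unfolding Z_def by auto
  have pa: "a = 0 \<or> \<not> nzv k (U (a-1))"
  proof (rule ccontr)
    assume "\<not> (a = 0 \<or> \<not> nzv k (U (a-1)))"
    then have "a - 1 \<in> Z" "a - 1 < a" unfolding Z_def by auto
    then show False using fin unfolding a_def by (meson Min_le not_le)
  qed
  have nb: "\<not> nzv k (U (Suc b))"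
  proof
    assume "nzv k (U (Suc b))"
    then have "Suc b \<in> Z" unfolding Z_def by auto
    then show False using fin unfolding b_def by (meson Max_ge not_less_eq_eq order_refl)
  qed
  have e1: "bw k G U a = 2^k" using bw_B0[OF G k, of U a] pa aZ unfolding Z_def by auto
  have e2: "bw k G U (Suc b) = 2^(k-1)" using bw_B1[OF G k, of "Suc b" U] nb bZ unfolding Z_def by auto
  have "bw k G U a + bw k G U (Suc b) = (\<Sum>t\<in>{a, Suc b}. bw k G U t)"
    using ab by simp
  also have "\<dots> \<le> (\<Sum>t<Suc T. bw k G U t)"
    by (rule sum_mono2) (use ab bT in auto)
  finally show ?thesis using e1 e2 pow_split[OF k] by simp
qed

lemma seq_ex:
  assumes G: "is_simplex_gen k G" and k: "k \<ge> 1" and T: "T \<ge> 1"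
    and nz0: "nzv k (U 0)" and z: "\<And>t. t \<ge> 1 \<Longrightarrow> \<not> nzv k (U t)"
  shows "(\<Sum>t<Suc T. bw k G U t) = 3 * 2^(k-1)"
proof -
  have "(\<Sum>t<Suc T. bw k G U t) = (\<Sum>t\<in>{0, 1}. bw k G U t)"
  proof (rule sum.mono_neutral_right)
    show "\<forall>i\<in>{..<Suc T} - {0, 1}. bw k G U i = 0"
    proof
      fix i assume "i \<in> {..<Suc T} - {0, 1}"
      then have "i \<ge> 2" by auto
      then show "bw k G U i = 0" using z[of i] z[of "i-1"] by (intro bw_B3) auto
    qed
  qed (use T in auto)
  also have "\<dots> = bw k G U 0 + bw k G U 1" by simp
  also have "bw k G U 0 = 2^k" using bw_B0[OF G k, of U 0] nz0 by simp
  also have "bw k G U 1 = 2^(k-1)" using bw_B1[OF G k, of 1 U] nz0 z by simp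
  finally show ?thesis using pow_split[OF k] by simp
qed



declare add_bit_eq_xor[simp del] mult_bit_eq_and[simp del]

lemma bit_neq: "(a::bit) \<noteq> b \<longleftrightarrow> a + b = 1"
  by (cases a; cases b) simp_all

lemma G0_row:
  assumes k: "k \<ge> 1" and m: "m < um_n k"
  shows "(\<Sum>i<k. a i * um_G0 k G i m) = ip k G a (m mod simplex_len k)"
proof -
  have L: "simplex_len k > 0" using L_pos[OF k] .
  have "um_G0 k G i m = G i (m mod simplex_len k)" if "i < k" for i
  proof (cases "m < simplex_len k")
    case True then show ?thesis using that by (simp add: um_G0_def)
  next
    case False
    then have "m mod simplex_len k = m - simplex_len k" using m unfolding um_n_def
      by (simp add: le_mod_geq)
    then show ?thesis using that False m by (simp add: um_G0_def um_n_def)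
  qed
  then show ?thesis unfolding ip_def by (auto intro!: sum.cong)
qed

lemma G1_row:
  "(\<Sum>i<k. a i * um_G1 k G i m) = (if m < simplex_len k then ip k G a m else 0)"
  unfolding ip_def um_G1_def by (auto intro!: sum.neutral)

lemma coeff_mult_lin:
  "coeff (p * [:a, b:]) t = a * coeff p t + (if t = 0 then 0 else b * coeff p (t - 1))"
  by (cases t) (simp_all add: mult.commute)

lemma conv_coeff:
  assumes k: "k \<ge> 1" and j: "j < um_n k"
  shows "coeff (\<Sum>i<k. u i * um_GD k G i j) t = cw k G (\<lambda>t i. coeff (u i) t) t j"
proof -
  have "coeff (\<Sum>i<k. u i * um_GD k G i j) t
     = (\<Sum>i<k. coeff (u i) t * um_G0 k G i j)
       + (if t = 0 then 0 else (\<Sum>i<k. coeff (u i) (t-1) * um_G1 k G i j))"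
    unfolding coeff_sum um_GD_def coeff_mult_lin
    by (simp add: sum.distrib sum_distrib_left mult.commute)
  also have "\<dots> = cw k G (\<lambda>t i. coeff (u i) t) t j"
    unfolding G0_row[OF k j] G1_row cw_def by simp
  finally show ?thesis .
qed



lemma code_struct:
  assumes k: "k \<ge> 1" and c: "c \<in> um_code k G"
  obtains U D where "\<And>j t. j < um_n k \<Longrightarrow> coeff (c j) t = cw k G U t j"
    and "\<And>t. t \<ge> D \<Longrightarrow> \<not> nzv k (U t)"
proof -
  obtain u where u: "c = (\<lambda>j. if j < um_n k then (\<Sum>i<k. u i * um_GD k G i j) else 0)"
    using c unfolding um_code_def by auto
  define D where "D = (\<Sum>i<k. Suc (degree (u i)))"
  have "\<not> nzv k (\<lambda>i. coeff (u i) t)" if "t \<ge> D" for t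
  proof -
    have "coeff (u i) t = 0" if "i < k" for i
    proof (rule coeff_eq_0)
      have "Suc (degree (u i)) \<le> D" unfolding D_def
        by (rule member_le_sum[where f = "\<lambda>i. Suc (degree (u i))"]) (use that in auto)
      then show "degree (u i) < t" using \<open>t \<ge> D\<close> by simp
    qed
    then show ?thesis unfolding nzv_def by auto
  qed
  moreover have "coeff (c j) t = cw k G (\<lambda>t i. coeff (u i) t) t j" if "j < um_n k" for j t
    using conv_coeff[OF k that] that u by simp
  ultimately show ?thesis using that by blast
qed

lemma trunc_formula:
  assumes "\<And>j t. j < um_n k \<Longrightarrow> coeff (c j) t = cw k G U t j"
  shows "trunc_wt (um_n k) J c = (\<Sum>t\<le>J. bw k G U t)"
proof -
  have "trunc_wt (um_n k) J c = (\<Sum>j\<in>{..<um_n k}. card {t\<in>{..J}. cw k G U t j = 1})"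
    unfolding trunc_wt_def using assms by (auto intro!: sum.cong arg_cong[where f = card])
  also have "\<dots> = (\<Sum>t\<in>{..J}. card {j\<in>{..<um_n k}. cw k G U t j = 1})"
    by (rule swap_card) auto
  also have "\<dots> = (\<Sum>t\<le>J. bw k G U t)"
    unfolding bw_def by (auto intro!: sum.cong arg_cong[where f = card])
  finally show ?thesis .
qed

lemma poly_formula:
  assumes "\<And>j t. j < um_n k \<Longrightarrow> coeff (c j) t = cw k G U t j"
    and "\<And>t. t \<ge> D \<Longrightarrow> \<not> nzv k (U t)"
  shows "poly_wt (um_n k) c = (\<Sum>t<Suc D. bw k G U t)"
proof -
  have "{t. coeff (c j) t \<noteq> 0} = {t\<in>{..<Suc D}. cw k G U t j = 1}" if "j < um_n k" for j
  proof -
    have "cw k G U t j = 0" if "t \<ge> Suc D" for t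
      by (rule cw_zero) (use assms(2) that in auto)
    then have "cw k G U t j = 1 \<Longrightarrow> t < Suc D" for t
      by (cases "t < Suc D") auto
    then show ?thesis using assms(1)[OF that] by auto
  qed
  then have "poly_wt (um_n k) c = (\<Sum>j\<in>{..<um_n k}. card {t\<in>{..<Suc D}. cw k G U t j = 1})"
    unfolding poly_wt_def by (auto intro!: sum.cong)
  also have "\<dots> = (\<Sum>t\<in>{..<Suc D}. card {j\<in>{..<um_n k}. cw k G U t j = 1})"
    by (rule swap_card) auto
  also have "\<dots> = (\<Sum>t<Suc D. bw k G U t)"
    unfolding bw_def by (auto intro!: sum.cong arg_cong[where f = card])
  finally show ?thesis .
qed

lemma cw_one_nz:
  assumes "cw k G U t m = 1"
  shows "nzv k (U t) \<or> (t \<ge> 1 \<and> nzv k (U (t-1)))"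
  using cw_zero[of k U t G m] assms by (cases t) auto

definition c0 :: "nat \<Rightarrow> f2mat \<Rightarrow> nat \<Rightarrow> bit poly" where
  "c0 k G = (\<lambda>j. if j < um_n k then (\<Sum>i<k. (if i = 0 then 1 else 0) * um_GD k G i j) else 0)"

definition U0 :: "nat \<Rightarrow> f2vec" where
  "U0 t i = (if t = 0 \<and> i = 0 then 1 else 0)"

lemma c0_props:
  assumes k: "k \<ge> 1"
  shows "c0 k G \<in> um_code k G"
    and "\<And>j t. j < um_n k \<Longrightarrow> coeff (c0 k G j) t = cw k G U0 t j"
    and "nzv k (U0 0)" and "\<And>t. t \<ge> 1 \<Longrightarrow> \<not> nzv k (U0 t)"
proof -
  show "c0 k G \<in> um_code k G" unfolding um_code_def c0_def
    by (rule CollectI, rule exI[of _ "\<lambda>i. if i = 0 then 1 else 0"]) (rule refl)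
  show "coeff (c0 k G j) t = cw k G U0 t j" if "j < um_n k" for j t
  proof -
    have "(\<lambda>t i. coeff ((if i = 0 then 1 else 0) :: bit poly) t) = U0"
      by (auto simp: fun_eq_iff U0_def)
    then show ?thesis using conv_coeff[OF k that, of "\<lambda>i. if i = 0 then 1 else 0" G t] that
      unfolding c0_def by simp
  qed
  show "nzv k (U0 0)" using k unfolding nzv_def U0_def by auto
  show "\<not> nzv k (U0 t)" if "t \<ge> 1" for t using that unfolding nzv_def U0_def by auto
qed



lemma c0_witness:
  assumes G: "is_simplex_gen k G" and k: "k \<ge> 1"
  shows "\<exists>j<um_n k. coeff (c0 k G j) 0 \<noteq> 0"
proof -
  have "bw k G U0 0 = 2^k" using bw_B0[OF G k, of U0 0] c0_props(3)[OF k] by simp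
  then have "{m. m < um_n k \<and> cw k G U0 0 m = 1} \<noteq> {}" unfolding bw_def
    by (metis card.empty power_not_zero zero_neq_numeral)
  then show ?thesis using c0_props(2)[OF k] by auto
qed

lemma col_lb:
  assumes G: "is_simplex_gen k G" and k: "k \<ge> 1"
    and c: "c \<in> um_code k G" and nz: "\<exists>j<um_n k. coeff (c j) 0 \<noteq> 0"
  shows "trunc_wt (um_n k) 0 c = 2^k" and "J \<ge> 1 \<Longrightarrow> 3 * 2^(k-1) \<le> trunc_wt (um_n k) J c"
proof -
  obtain U D where U: "\<And>j t. j < um_n k \<Longrightarrow> coeff (c j) t = cw k G U t j"
    and D: "\<And>t. t \<ge> D \<Longrightarrow> \<not> nzv k (U t)" using code_struct[OF k c] by blast
  have n0: "nzv k (U 0)" using nz U cw_one_nz[of k G U 0] by (metis bit_not_zero_iff bot_nat_0.extremum_unique not_one_le_zero)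
  have b0: "bw k G U 0 = 2^k" using bw_B0[OF G k, of U 0] n0 by simp
  show "trunc_wt (um_n k) 0 c = 2^k" using trunc_formula[OF U, of 0] b0 by simp
  assume J: "J \<ge> 1"
  have b1: "bw k G U 1 \<ge> 2^(k-1)"
  proof (cases "nzv k (U 1)")
    case True then show ?thesis using bw_B2[OF G k] by blast
  next
    case False then show ?thesis using bw_B1[OF G k, of 1 U] n0 by simp
  qed
  have "bw k G U 0 + bw k G U 1 = (\<Sum>t\<in>{0,1}. bw k G U t)" by simp
  also have "\<dots> \<le> (\<Sum>t\<le>J. bw k G U t)" by (rule sum_mono2) (use J in auto)
  finally show "3 * 2^(k-1) \<le> trunc_wt (um_n k) J c"
    using trunc_formula[OF U, of J] b0 b1 pow_split[OF k] by simp
qed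

lemma c0_trunc:
  assumes G: "is_simplex_gen k G" and k: "k \<ge> 1"
  shows "trunc_wt (um_n k) 0 (c0 k G) = 2^k"
    and "J \<ge> 1 \<Longrightarrow> trunc_wt (um_n k) J (c0 k G) = 3 * 2^(k-1)"
proof -
  show "trunc_wt (um_n k) 0 (c0 k G) = 2^k"
    using col_lb(1)[OF G k c0_props(1)[OF k] c0_witness[OF G k]] .
  assume J: "J \<ge> 1"
  have "trunc_wt (um_n k) J (c0 k G) = (\<Sum>t<Suc J. bw k G U0 t)"
    using trunc_formula[OF c0_props(2)[OF k], of J] by (simp add: lessThan_Suc_atMost)
  also have "\<dots> = 3 * 2^(k-1)"
    using seq_ex[OF G k J, of U0] c0_props(3,4)[OF k] by blast
  finally show "trunc_wt (um_n k) J (c0 k G) = 3 * 2^(k-1)" .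
qed

lemma column0:
  assumes G: "is_simplex_gen k G" and k: "k \<ge> 1"
  shows "column_distance k G 0 = 2^k"
  unfolding column_distance_def
proof (rule cInf_eq_minimum)
  show "2 ^ k \<in> {trunc_wt (um_n k) 0 c |c. c \<in> um_code k G \<and> (\<exists>j<um_n k. coeff (c j) 0 \<noteq> 0)}"
    using c0_trunc(1)[OF G k] c0_props(1)[OF k] c0_witness[OF G k] by (metis (mono_tags, lifting) mem_Collect_eq)
  fix x assume "x \<in> {trunc_wt (um_n k) 0 c |c. c \<in> um_code k G \<and> (\<exists>j<um_n k. coeff (c j) 0 \<noteq> 0)}"
  then obtain c where "x = trunc_wt (um_n k) 0 c" "c \<in> um_code k G" "\<exists>j<um_n k. coeff (c j) 0 \<noteq> 0"
    by blast
  then show "2^k \<le> x" using col_lb(1)[OF G k] by simp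
qed

lemma columnJ:
  assumes G: "is_simplex_gen k G" and k: "k \<ge> 1" and J: "J \<ge> 1"
  shows "column_distance k G J = 3 * 2^(k-1)"
  unfolding column_distance_def
proof (rule cInf_eq_minimum)
  show "3 * 2^(k-1) \<in> {trunc_wt (um_n k) J c |c. c \<in> um_code k G \<and> (\<exists>j<um_n k. coeff (c j) 0 \<noteq> 0)}"
    using c0_trunc(2)[OF G k J] c0_props(1)[OF k] c0_witness[OF G k] by (metis (mono_tags, lifting) mem_Collect_eq)
  fix x assume "x \<in> {trunc_wt (um_n k) J c |c. c \<in> um_code k G \<and> (\<exists>j<um_n k. coeff (c j) 0 \<noteq> 0)}"
  then obtain c where "x = trunc_wt (um_n k) J c" "c \<in> um_code k G" "\<exists>j<um_n k. coeff (c j) 0 \<noteq> 0"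
    by blast
  then show "3 * 2^(k-1) \<le> x" using col_lb(2)[OF G k _ _ J] by simp
qed

lemma free_lb:
  assumes G: "is_simplex_gen k G" and k: "k \<ge> 1"
    and c: "c \<in> um_code k G" and nz: "\<exists>j<um_n k. c j \<noteq> 0"
  shows "3 * 2^(k-1) \<le> poly_wt (um_n k) c"
proof -
  obtain U D where U: "\<And>j t. j < um_n k \<Longrightarrow> coeff (c j) t = cw k G U t j"
    and D: "\<And>t. t \<ge> D \<Longrightarrow> \<not> nzv k (U t)" using code_struct[OF k c] by blast
  obtain j where j: "j < um_n k" "c j \<noteq> 0" using nz by blast
  then obtain t where "coeff (c j) t \<noteq> 0" by (metis leading_coeff_0_iff)
  then have "cw k G U t j = 1" using U[OF j(1)] by simp
  then have "{t. nzv k (U t)} \<noteq> {}" using cw_one_nz by blast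
  moreover have "{t. nzv k (U t)} \<subseteq> {..<D}" using D by (auto simp: not_less[symmetric])
  ultimately show ?thesis using seq_lb[OF G k] poly_formula[OF U D] by simp
qed

lemma free_dist:
  assumes G: "is_simplex_gen k G" and k: "k \<ge> 1"
  shows "free_distance k G = 3 * 2^(k-1)"
  unfolding free_distance_def
proof (rule cInf_eq_minimum)
  have w: "\<exists>j<um_n k. c0 k G j \<noteq> 0" using c0_witness[OF G k] by fastforce
  have "poly_wt (um_n k) (c0 k G) = (\<Sum>t<Suc 1. bw k G U0 t)"
    by (rule poly_formula[OF c0_props(2)[OF k] c0_props(4)[OF k]])
  also have "\<dots> = 3 * 2^(k-1)" using seq_ex[OF G k _, of 1 U0] c0_props(3,4)[OF k] by blast
  finally show "3 * 2^(k-1) \<in> {poly_wt (um_n k) c |c. c \<in> um_code k G \<and> (\<exists>j<um_n k. c j \<noteq> 0)}"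
    using c0_props(1)[OF k] w by (metis (mono_tags, lifting) mem_Collect_eq)
  fix x assume "x \<in> {poly_wt (um_n k) c |c. c \<in> um_code k G \<and> (\<exists>j<um_n k. c j \<noteq> 0)}"
  then obtain c where "x = poly_wt (um_n k) c" "c \<in> um_code k G" "\<exists>j<um_n k. c j \<noteq> 0"
    by blast
  then show "3 * 2^(k-1) \<le> x" using free_lb[OF G k] by simp
qed



definition Wf :: "nat \<Rightarrow> nat \<Rightarrow> f2vec \<Rightarrow> nat \<Rightarrow> f2vec" where
  "Wf k s w t i = (if t \<le> s then w (t * k + i) else 0)"

definition cwd :: "nat \<Rightarrow> f2mat \<Rightarrow> nat \<Rightarrow> f2vec \<Rightarrow> f2vec" where
  "cwd k G s u = (\<lambda>j. if j < (s + 2) * um_n k then vecmat ((s + 1) * k) u (um_Gtotal k G s) j else 0)"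

lemma sum_add_ivl:
  fixes a b :: nat and f :: "nat \<Rightarrow> 'a::comm_monoid_add"
  shows "(\<Sum>r<a + b. f r) = (\<Sum>r<a. f r) + (\<Sum>i<b. f (a + i))"
  by (induction b) (simp_all add: add_ac)

lemma sum_blocks:
  fixes N k :: nat and f :: "nat \<Rightarrow> 'a::comm_monoid_add"
  shows "(\<Sum>r<N * k. f r) = (\<Sum>q<N. \<Sum>i<k. f (q * k + i))"
proof (induction N)
  case 0 then show ?case by simp
next
  case (Suc N)
  have "(\<Sum>r<Suc N * k. f r) = (\<Sum>r<N * k + k. f r)" by (simp add: add.commute)
  also have "\<dots> = (\<Sum>r<N * k. f r) + (\<Sum>i<k. f (N * k + i))" by (rule sum_add_ivl)
  finally show ?case using Suc.IH by simp
qed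

lemma Gt_entry:
  assumes k: "k \<ge> 1" and i: "i < k" and q: "q \<le> s" and c: "c < (s + 2) * um_n k"
  shows "um_Gtotal k G s (q * k + i) c =
    (if c div um_n k = q then um_G0 k G i (c mod um_n k)
     else if c div um_n k = Suc q then um_G1 k G i (c mod um_n k) else 0)"
proof -
  have d: "(q * k + i) div k = q" and m: "(q * k + i) mod k = i" using i by auto
  have "q * k + i < Suc q * k" using i by simp
  also have "Suc q * k \<le> (s + 1) * k" using q by (intro mult_le_mono1) simp
  finally have "q * k + i < (s + 1) * k" .
  then show ?thesis using c d m unfolding um_Gtotal_def by simp
qed

lemma vecmat_add: "vecmat K u M j + vecmat K v M j = vecmat K (\<lambda>i. u i + v i) M j"
  unfolding vecmat_def by (simp only: sum.distrib[symmetric] distrib_right)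

lemma vecmat_cw:
  assumes k: "k \<ge> 1" and c: "c < (s + 2) * um_n k"
  shows "vecmat ((s + 1) * k) w (um_Gtotal k G s) c = cw k G (Wf k s w) (c div um_n k) (c mod um_n k)"
proof -
  define n where "n = um_n k"
  define td where "td = c div n"
  define m where "m = c mod n"
  have n: "n > 0" using L_pos[OF k] unfolding n_def um_n_def by simp
  have mn: "m < n" unfolding m_def using n by simp
  have "td < s + 2" unfolding td_def n_def using less_mult_imp_div_less[OF c] .
  then have tds: "td \<le> s + 1" by simp
  define A where "A = (\<lambda>q. \<Sum>i<k. Wf k s w q i * um_G0 k G i m)"
  define B where "B = (\<lambda>q. \<Sum>i<k. Wf k s w q i * um_G1 k G i m)"
  have inner: "(\<Sum>i<k. w (q * k + i) * um_Gtotal k G s (q * k + i) c)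
      = (if td = q then A q else 0) + (if td = Suc q then B q else 0)" if "q < s + 1" for q
  proof -
    have "(\<Sum>i<k. w (q * k + i) * um_Gtotal k G s (q * k + i) c)
       = (\<Sum>i<k. Wf k s w q i * (if td = q then um_G0 k G i m
            else if td = Suc q then um_G1 k G i m else 0))"
      using that Gt_entry[OF k _ _ c] unfolding Wf_def td_def m_def n_def
      by (intro sum.cong) auto
    also have "\<dots> = (if td = q then A q else 0) + (if td = Suc q then B q else 0)"
      unfolding A_def B_def by (auto intro!: sum.neutral)
    finally show ?thesis .
  qed
  have "vecmat ((s + 1) * k) w (um_Gtotal k G s) c
      = (\<Sum>q<s + 1. \<Sum>i<k. w (q * k + i) * um_Gtotal k G s (q * k + i) c)"
    unfolding vecmat_def by (rule sum_blocks)
  also have "\<dots> = (\<Sum>q<s + 1. (if td = q then A q else 0) + (if td = Suc q then B q else 0))"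
    using inner by (intro sum.cong) auto
  also have "\<dots> = (\<Sum>q<s + 1. if td = q then A q else 0) + (\<Sum>q<s + 1. if td = Suc q then B q else 0)"
    by (rule sum.distrib)
  also have "(\<Sum>q<s + 1. if td = q then A q else 0) = ip k G (Wf k s w td) (m mod simplex_len k)"
  proof (cases "td < s + 1")
    case True
    then show ?thesis using sum.delta'[of "{..<s+1}" td A] G0_row[OF k, of m "Wf k s w td" G] mn
      unfolding A_def n_def by simp
  next
    case False
    then have "\<not> nzv k (Wf k s w td)" unfolding nzv_def Wf_def by auto
    then show ?thesis using False ip_zero by (auto intro!: sum.neutral)
  qed
  also have "(\<Sum>q<s + 1. if td = Suc q then B q else 0)
      = (if td = 0 then 0 else if m < simplex_len k then ip k G (Wf k s w (td - 1)) m else 0)"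
  proof (cases td)
    case 0 then show ?thesis by simp
  next
    case (Suc p)
    then have "p < s + 1" using tds by simp
    then have "(\<Sum>q<s + 1. if td = Suc q then B q else 0) = B p"
      using sum.delta'[of "{..<s+1}" p B] Suc by simp
    then show ?thesis unfolding B_def G1_row using Suc by simp
  qed
  finally show ?thesis unfolding cw_def td_def m_def n_def .
qed

lemma pw:
  assumes k: "k \<ge> 1" and j: "j < (s + 2) * um_n k"
  shows "cwd k G s u j \<noteq> cwd k G s v j \<longleftrightarrow>
     cw k G (Wf k s (\<lambda>i. u i + v i)) (j div um_n k) (j mod um_n k) = 1"
proof -
  have "cwd k G s u j \<noteq> cwd k G s v j \<longleftrightarrow>
      vecmat ((s + 1) * k) u (um_Gtotal k G s) j + vecmat ((s + 1) * k) v (um_Gtotal k G s) j = 1"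
    using j by (simp add: cwd_def bit_neq)
  also have "\<dots> \<longleftrightarrow> vecmat ((s + 1) * k) (\<lambda>i. u i + v i) (um_Gtotal k G s) j = 1"
    by (simp only: vecmat_add)
  also have "\<dots> \<longleftrightarrow> cw k G (Wf k s (\<lambda>i. u i + v i)) (j div um_n k) (j mod um_n k) = 1"
    by (simp only: vecmat_cw[OF k j])
  finally show ?thesis .
qed

lemma hd_formula:
  assumes k: "k \<ge> 1"
  shows "hamming_dist ((s + 2) * um_n k) (cwd k G s u) (cwd k G s v)
     = (\<Sum>t<s + 2. bw k G (Wf k s (\<lambda>i. u i + v i)) t)"
proof -
  define W where "W = Wf k s (\<lambda>i. u i + v i)"
  have "hamming_dist ((s + 2) * um_n k) (cwd k G s u) (cwd k G s v)
     = card {c. c < (s + 2) * um_n k \<and> cw k G W (c div um_n k) (c mod um_n k) = 1}"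
    unfolding hamming_dist_def W_def using pw[OF k] by (intro arg_cong[where f = card]) blast
  also have "\<dots> = (\<Sum>t<s + 2. card {m. m < um_n k \<and> cw k G W t m = 1})"
    by (rule block_card)
  finally show ?thesis unfolding bw_def W_def .
qed

lemma block_min:
  assumes G: "is_simplex_gen k G" and k: "k \<ge> 1"
  shows "min_dist ((s + 2) * um_n k)
           (block_code ((s + 1) * k) ((s + 2) * um_n k) (um_Gtotal k G s)) = 3 * 2^(k - 1)"
proof -
  have BC: "block_code ((s + 1) * k) ((s + 2) * um_n k) (um_Gtotal k G s) = {cwd k G s u | u. True}"
    unfolding block_code_def cwd_def ..
  define e :: f2vec where "e = (\<lambda>r. if r = 0 then 1 else 0)"
  define W where "W = Wf k s (\<lambda>i. e i + 0)"
  have W0: "nzv k (W 0)" using k unfolding W_def Wf_def e_def nzv_def by auto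
  have Wt: "\<not> nzv k (W t)" if "t \<ge> 1" for t
    using that k unfolding W_def Wf_def e_def nzv_def by auto
  have hd: "hamming_dist ((s + 2) * um_n k) (cwd k G s e) (cwd k G s (\<lambda>_. 0)) = 3 * 2^(k - 1)"
  proof -
    have "hamming_dist ((s + 2) * um_n k) (cwd k G s e) (cwd k G s (\<lambda>_. 0))
        = (\<Sum>t<Suc (Suc s). bw k G W t)"
      using hd_formula[OF k, of s G e "\<lambda>_. 0"] unfolding W_def by simp
    also have "\<dots> = 3 * 2^(k - 1)" using seq_ex[OF G k _, of "Suc s" W] W0 Wt by simp
    finally show ?thesis .
  qed
  have ne: "cwd k G s e \<noteq> cwd k G s (\<lambda>_. 0)"
  proof
    assume "cwd k G s e = cwd k G s (\<lambda>_. 0)"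
    then have "hamming_dist ((s + 2) * um_n k) (cwd k G s e) (cwd k G s (\<lambda>_. 0)) = 0"
      unfolding hamming_dist_def by simp
    then show False using hd by simp
  qed
  show ?thesis unfolding min_dist_def BC
  proof (rule cInf_eq_minimum)
    show "3 * 2^(k - 1) \<in> {hamming_dist ((s + 2) * um_n k) x y |x y.
        x \<in> {cwd k G s u |u. True} \<and> y \<in> {cwd k G s u |u. True} \<and> x \<noteq> y}"
    proof -
      have "cwd k G s e \<in> {cwd k G s u |u. True}" "cwd k G s (\<lambda>_. 0) \<in> {cwd k G s u |u. True}"
        by blast+
      then show ?thesis using hd ne by (metis (mono_tags, lifting) mem_Collect_eq)
    qed
  next
    fix d assume "d \<in> {hamming_dist ((s + 2) * um_n k) x y |x y.
        x \<in> {cwd k G s u |u. True} \<and> y \<in> {cwd k G s u |u. True} \<and> x \<noteq> y}"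
    then obtain u v where d: "d = hamming_dist ((s + 2) * um_n k) (cwd k G s u) (cwd k G s v)"
      and uv: "cwd k G s u \<noteq> cwd k G s v" by blast
    define V where "V = Wf k s (\<lambda>i. u i + v i)"
    obtain j where j: "cwd k G s u j \<noteq> cwd k G s v j" using uv by blast
    then have jN: "j < (s + 2) * um_n k" unfolding cwd_def by (auto split: if_splits)
    then have "cw k G V (j div um_n k) (j mod um_n k) = 1" using pw[OF k jN] j unfolding V_def by simp
    then have "{t. nzv k (V t)} \<noteq> {}" using cw_one_nz by blast
    moreover have "{t. nzv k (V t)} \<subseteq> {..<Suc s}"
      unfolding V_def Wf_def nzv_def by auto
    ultimately have "3 * 2^(k-1) \<le> (\<Sum>t<Suc (Suc s). bw k G V t)" by (rule seq_lb[OF G k])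
    then show "3 * 2^(k - 1) \<le> d" using d hd_formula[OF k, of s G u v] unfolding V_def by simp
  qed
qed

theorem theorem5p1:
  fixes k :: nat and G :: "nat \<Rightarrow> nat \<Rightarrow> bit"
  assumes "k \<ge> 2" and "is_simplex_gen k G"
  shows "(\<forall>s::nat. min_dist ((s + 2) * um_n k)
                     (block_code ((s + 1) * k) ((s + 2) * um_n k) (um_Gtotal k G s)) = 3 * 2^(k - 1))
    \<and> column_distance k G 0 = 2^k
    \<and> free_distance k G = 3 * 2^(k - 1)
    \<and> (\<forall>J\<ge>1. column_distance k G J = 3 * 2^(k - 1))"
proof -
  have k: "k \<ge> 1" using assms(1) by simp
  show ?thesis using block_min[OF assms(2) k] column0[OF assms(2) k] free_dist[OF assms(2) k]
      columnJ[OF assms(2) k] by blast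
qed

end
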